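(* Let $m$ be a nonnegative integer and $F$ a distribution function with finite $m$-th absolute moment. In $(\mathbb R_m[\mathrm D],\circ)$, $$\mathsf L_{F,m}^{-1}=\sum_{k=0}^m(\mathrm{Id}-\mathsf L_{F,m})^{\circ k}=\sum_{j=0}^m(-1)^j\mathsf L_{F,m}^{\circ j}\sum_{k=j}^m\binom{k}{j}.$$
   Context: $(\mathbb R_m[\mathrm D],\circ)$ is the ring of polynomials in $\mathrm D$ of degree at most $m$ with multiplication of polynomials modulo $\mathrm D^{m+1}$; $\mathrm{Id}$ is its unit $\mathrm D^0$. For $T$ in this ring, $T^{\circ0}=\mathrm{Id}$ and $T^{\circ k}=T\circ T^{\circ(k-1)}$. $\mu_{F,k}=\int x^k\,dF(x)$ and $\mathsf L_{F,m}=\sum_{k=0}^m\frac{(-1)^k}{k!}\mu_{F,k}\mathrm D^k$. *)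

theory Defs
  imports "HOL-Analysis.Analysis" "HOL-Computational_Algebra.Polynomial"
begin

definition distribution_function :: "(real \<Rightarrow> real) \<Rightarrow> bool" where
  "distribution_function F \<longleftrightarrow> mono F \<and> (\<forall>x. continuous (at_right x) F)
     \<and> (F \<longlongrightarrow> 0) at_bot \<and> (F \<longlongrightarrow> 1) at_top"

definition moment :: "(real \<Rightarrow> real) \<Rightarrow> nat \<Rightarrow> real" where
  "moment F k = integral\<^sup>L (interval_measure F) (\<lambda>x. x ^ k)"

text \<open>Elements of R_m[D] are real polynomials in D of degree at most m;
  multiplication is ordinary multiplication truncated modulo D^(m+1).\<close>
definition in_Rm :: "nat \<Rightarrow> real poly \<Rightarrow> bool" where
  "in_Rm m p \<longleftrightarrow> degree p \<le> m"

definition tmult :: "nat \<Rightarrow> real poly \<Rightarrow> real poly \<Rightarrow> real poly" where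
  "tmult m p q = (\<Sum>k\<le>m. monom (coeff (p * q) k) k)"

primrec tpow :: "nat \<Rightarrow> real poly \<Rightarrow> nat \<Rightarrow> real poly" where
  "tpow m T 0 = 1"
| "tpow m T (Suc k) = tmult m T (tpow m T k)"

definition LF :: "(real \<Rightarrow> real) \<Rightarrow> nat \<Rightarrow> real poly" where
  "LF F m = (\<Sum>k\<le>m. monom ((-1) ^ k / fact k * moment F k) k)"

end

theory Submission
  imports Defs
begin

lemma mom0:
  assumes "distribution_function F"
  shows "moment F 0 = 1"
proof -
  have mono: "mono F" and rc: "\<And>x. continuous (at_right x) F"
   and bot: "(F \<longlongrightarrow> 0) at_bot" and top: "(F \<longlongrightarrow> 1) at_top"
    using assms unfolding distribution_function_def by auto
  let ?M = "interval_measure F"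
  define A where "A n = {- real n<..real n}" for n
  have "(\<lambda>n. emeasure ?M (A n)) \<longlonglongrightarrow> emeasure ?M (\<Union>n. A n)"
    by (rule Lim_emeasure_incseq) (auto simp: A_def incseq_def)
  moreover have "(\<Union>n. A n) = UNIV"
  proof (intro equalityI subsetI)
    fix x :: real assume "x \<in> UNIV"
    obtain n where "\<bar>x\<bar> < real n" using reals_Archimedean2 by blast
    then have "x \<in> A n" by (auto simp: A_def)
    then show "x \<in> (\<Union>n. A n)" by blast
  qed simp
  moreover have "emeasure ?M (A n) = ennreal (F (real n) - F (- real n))" for n
    unfolding A_def by (rule emeasure_interval_measure_Ioc) (auto intro: rc monoD[OF mono])
  moreover have "(\<lambda>n. ennreal (F (real n) - F (- real n))) \<longlonglongrightarrow> ennreal (1 - 0)"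
  proof (intro tendsto_ennrealI tendsto_diff)
    show "(\<lambda>n. F (real n)) \<longlonglongrightarrow> 1"
      by (rule filterlim_compose[OF top filterlim_real_sequentially])
    have "filterlim (\<lambda>n. - real n) at_bot sequentially"
      using filterlim_real_sequentially filterlim_uminus_at_top by (simp add: filterlim_uminus_at_bot)
    then show "(\<lambda>n. F (- real n)) \<longlonglongrightarrow> 0"
      by (rule filterlim_compose[OF bot])
  qed
  ultimately have "emeasure ?M UNIV = 1"
    using LIMSEQ_unique by fastforce
  then have "measure ?M UNIV = 1" by (simp add: measure_def)
  then show ?thesis by (simp add: moment_def)
qed

lemma tmult_mod: "tmult m p q = (p * q) mod monom 1 (Suc m)"
proof -
  let ?M = "monom (1::real) (Suc m)"
  define r where "r = p * q"
  define t where "t = (\<Sum>k\<le>m. monom (coeff r k) k)"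
  have ct: "coeff t k = (if k \<le> m then coeff r k else 0)" for k
    by (simp add: t_def coeff_sum coeff_monom)
  have "?M dvd (r - t)"
    unfolding monom_1_dvd_iff' by (simp add: ct)
  then have "r mod ?M = t mod ?M" by (simp add: mod_eq_dvd_iff)
  moreover have "degree t < degree ?M"
  proof -
    have "degree t \<le> m" by (rule degree_le) (simp add: ct)
    then show ?thesis by (simp add: degree_monom_eq)
  qed
  ultimately have "r mod ?M = t" by (simp add: mod_poly_less)
  then show ?thesis by (simp add: tmult_def t_def r_def)
qed

lemma tpow_mod: "tpow m T k = T ^ k mod monom 1 (Suc m)"
proof (induction k)
  case 0
  have "degree (1::real poly) < degree (monom (1::real) (Suc m))" by (simp add: degree_monom_eq)
  then show ?case by (simp add: mod_poly_less)
next
  case (Suc k)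
  then show ?case by (simp add: tmult_mod mod_mult_right_eq)
qed

lemma sum_mod_poly: "finite A \<Longrightarrow> (\<Sum>i\<in>A. f i) mod (z::real poly) = (\<Sum>i\<in>A. f i mod z)"
  by (induction A rule: finite_induct) (auto simp: poly_mod_add_left)

lemma neg_pow: "(- L) ^ j = smult ((-1) ^ j) ((L::real poly) ^ j)"
  by (induction j) auto

lemma binom_swap:
  fixes L :: "real poly"
  shows "(\<Sum>k\<le>m. (1 - L) ^ k) = (\<Sum>j\<le>m. smult ((-1) ^ j * (\<Sum>k=j..m. of_nat (k choose j))) (L ^ j))"
proof (induction m)
  case 0
  then show ?case by simp
next
  case (Suc m)
  have b: "(1 - L) ^ Suc m = (\<Sum>j\<le>Suc m. smult ((-1) ^ j * of_nat (Suc m choose j)) (L ^ j))"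
  proof -
    have "(1 - L) ^ Suc m = ((- L) + 1) ^ Suc m" by simp
    also have "\<dots> = (\<Sum>j\<le>Suc m. of_nat (Suc m choose j) * (- L) ^ j * 1 ^ (Suc m - j))"
      by (rule binomial_ring)
    also have "\<dots> = (\<Sum>j\<le>Suc m. smult ((-1) ^ j * of_nat (Suc m choose j)) (L ^ j))"
    proof (intro sum.cong refl)
      fix j
      have "(- L) ^ j = smult ((-1) ^ j) (L ^ j)" by (rule neg_pow)
      moreover have "(of_nat (Suc m choose j) :: real poly) * p = smult (of_nat (Suc m choose j)) p" for p
        by (simp add: of_nat_poly)
      ultimately show "of_nat (Suc m choose j) * (- L) ^ j * 1 ^ (Suc m - j)
          = smult ((-1) ^ j * of_nat (Suc m choose j)) (L ^ j)"
        by (simp add: mult.commute)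
    qed
    finally show ?thesis .
  qed
  have "(\<Sum>j\<le>Suc m. smult ((-1) ^ j * (\<Sum>k=j..Suc m. of_nat (k choose j))) (L ^ j))
     = (\<Sum>j\<le>Suc m. smult ((-1) ^ j * (\<Sum>k=j..m. of_nat (k choose j))) (L ^ j))
       + (\<Sum>j\<le>Suc m. smult ((-1) ^ j * of_nat (Suc m choose j)) (L ^ j))"
    by (simp add: sum.distrib[symmetric] smult_add_left[symmetric] distrib_left)
  also have "(\<Sum>j\<le>Suc m. smult ((-1) ^ j * (\<Sum>k=j..m. of_nat (k choose j))) (L ^ j))
     = (\<Sum>j\<le>m. smult ((-1) ^ j * (\<Sum>k=j..m. of_nat (k choose j))) (L ^ j))"
    by simp
  finally show ?case using Suc b by simp
qed


lemma geo_poly: "(1 - N) * (\<Sum>k\<le>n. N ^ k) = 1 - (N::real poly) ^ Suc n"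
proof (induction n)
  case 0
  then show ?case by simp
next
  case (Suc n)
  have "(1 - N) * (\<Sum>k\<le>Suc n. N ^ k) = (1 - N) * (\<Sum>k\<le>n. N ^ k) + (1 - N) * N ^ Suc n"
    by (simp add: distrib_left)
  also have "\<dots> = 1 - N ^ Suc (Suc n)" using Suc.IH by (simp add: algebra_simps)
  finally show ?case .
qed

theorem proposition2p1p3:
  fixes F :: "real \<Rightarrow> real" and m :: nat
  assumes "distribution_function F"
    and "integrable (interval_measure F) (\<lambda>x. \<bar>x\<bar> ^ m)"
  defines "S \<equiv> (\<Sum>k\<le>m. tpow m (1 - LF F m) k)"
  shows "tmult m (LF F m) S = 1 \<and> tmult m S (LF F m) = 1
    \<and> S = (\<Sum>j\<le>m. smult ((-1) ^ j * (\<Sum>k=j..m. of_nat (k choose j))) (tpow m (LF F m) j))"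
proof -
  define M where "M = monom (1::real) (Suc m)"
  define L where "L = LF F m"
  define N where "N = 1 - L"
  have S1: "S = (\<Sum>k\<le>m. N ^ k) mod M"
    unfolding S_def tpow_mod M_def N_def L_def by (simp add: sum_mod_poly)
  have "coeff L 0 = moment F 0"
    unfolding L_def LF_def by (simp add: coeff_sum coeff_monom)
  then have c0: "coeff N 0 = 0" using mom0[OF assms(1)] by (simp add: N_def)
  have "monom 1 1 dvd N" unfolding monom_1_dvd_iff' using c0 by simp
  then have "monom 1 1 ^ Suc m dvd N ^ Suc m" by (rule dvd_power_same)
  moreover have "monom (1::real) 1 ^ Suc m = monom 1 (Suc m)"
    using monom_power[of "1::real" 1 "Suc m"] by simp
  ultimately have dv: "M dvd N ^ Suc m" by (simp only: M_def)
  have deg1: "degree (1::real poly) < degree M" by (simp add: M_def degree_monom_eq)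
  have key: "(L * (\<Sum>k\<le>m. N ^ k)) mod M = 1"
  proof -
    have "L = 1 - N" by (simp add: N_def)
    then have "L * (\<Sum>k\<le>m. N ^ k) = 1 - N ^ Suc m" using geo_poly by simp
    then show ?thesis using dv deg1 by (simp add: poly_mod_diff_left mod_poly_less)
  qed
  have A: "tmult m L S = 1"
    unfolding tmult_mod M_def[symmetric] S1 using key by (metis mod_mult_right_eq)
  have B: "tmult m S L = 1"
    unfolding tmult_mod M_def[symmetric] S1 using key by (metis mod_mult_left_eq mult.commute)
  have C: "S = (\<Sum>j\<le>m. smult ((-1) ^ j * (\<Sum>k=j..m. of_nat (k choose j))) (tpow m L j))"
    unfolding S1 binom_swap N_def tpow_mod M_def[symmetric]
    by (simp add: sum_mod_poly mod_smult_left)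
  show ?thesis using A B C by (simp add: L_def)
qed

end
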